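(* Let $n\ge 5$ and $M\ge1$ be integers, $U=\{0,1,\ldots,M-1\}$, and let $\phi:\binom{U}{2}\to\{\text{red},\text{blue}\}$ be a $2$-coloring such that every $n$-element subset of $U$ contains three elements $x<y<z$ with $\phi(x,y)=\phi(y,z)\ne\phi(x,z)$. Let $H=H_\phi$ be the $4$-uniform hypergraph on $V=\{0,\ldots,2^M-1\}$ defined below. Then the independence number of $H$ satisfies $\alpha(H)<2^6n^5+1$, i.e., $H$ has no independent set of size $2^6n^5+1$.
   Context: Every $a\in V=\{0,\ldots,2^M-1\}$ is written in binary as $a=\sum_{i=0}^{M-1}a(i)2^i$ with $a(i)\in\{0,1\}$. For $a\ne b$ in $V$, $\delta(a,b)$ denotes the largest index $i$ with $a(i)\ne b(i)$; thus $\delta(a,b)\in U$. For a pair $\{x,y\}$ of distinct elements of $U$ we write $\phi(x,y)=\phi(y,x)$ for its color. For a $4$-tuple $v_1<v_2<v_3<v_4$ of $V$, set $\delta_i=\delta(v_i,v_{i+1})$ for $i=1,2,3$. The $4$-tuple $\{v_1,v_2,v_3,v_4\}$ is an edge of $H$ if and only if one of the following holds: (i) $\delta_1<\delta_2<\delta_3$ or $\delta_1>\delta_2>\delta_3$, and $\phi(\delta_1,\delta_2)=\phi(\delta_2,\delta_3)\ne\phi(\delta_1,\delta_3)$; (ii) $\delta_1>\delta_2<\delta_3$, $\delta_1>\delta_3$, and $\phi(\delta_1,\delta_2)\ne\phi(\delta_2,\delta_3)$; (iii) $\delta_1>\delta_2<\delta_3$, $\delta_1<\delta_3$, and $\phi(\delta_1,\delta_2)=\phi(\delta_1,\delta_3)=\phi(\delta_2,\delta_3)$.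 An independent set of $H$ is a set of vertices containing no edge of $H$; $\alpha(H)$ is the maximum size of an independent set. *)

theory Defs
  imports Main
begin

definition bitd :: "nat \<Rightarrow> nat \<Rightarrow> nat" where
  "bitd a i = a div 2 ^ i mod 2"

definition delta :: "nat \<Rightarrow> nat \<Rightarrow> nat \<Rightarrow> nat" where
  "delta M a b = Max {i. i < M \<and> bitd a i \<noteq> bitd b i}"

(* the edge condition for v1 < v2 < v3 < v4; the colouring phi is given as a
   function on pairs (assumed symmetric), colours encoded as bool *)
definition is_edge :: "nat \<Rightarrow> (nat \<Rightarrow> nat \<Rightarrow> bool) \<Rightarrow> nat \<Rightarrow> nat \<Rightarrow> nat \<Rightarrow> nat \<Rightarrow> bool" where
  "is_edge M phi v1 v2 v3 v4 =
    (let d1 = delta M v1 v2; d2 = delta M v2 v3; d3 = delta M v3 v4 in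
      (((d1 < d2 \<and> d2 < d3) \<or> (d1 > d2 \<and> d2 > d3)) \<and>
          phi d1 d2 = phi d2 d3 \<and> phi d2 d3 \<noteq> phi d1 d3)
    \<or> (d1 > d2 \<and> d2 < d3 \<and> d1 > d3 \<and> phi d1 d2 \<noteq> phi d2 d3)
    \<or> (d1 > d2 \<and> d2 < d3 \<and> d1 < d3 \<and> phi d1 d2 = phi d1 d3 \<and> phi d1 d3 = phi d2 d3))"

definition independent :: "nat \<Rightarrow> (nat \<Rightarrow> nat \<Rightarrow> bool) \<Rightarrow> nat set \<Rightarrow> bool" where
  "independent M phi S =
    (S \<subseteq> {0..<2 ^ M} \<and>
     (\<forall>v1 v2 v3 v4. v1 \<in> S \<and> v2 \<in> S \<and> v3 \<in> S \<and> v4 \<in> S \<and>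
        v1 < v2 \<and> v2 < v3 \<and> v3 < v4 \<longrightarrow> \<not> is_edge M phi v1 v2 v3 v4))"

end

theory Submission
  imports Defs
begin

lemma bitd_eq: "bitd a i = (if bit a i then 1 else 0)"
  by (simp add: bitd_def bit_iff_odd odd_iff_mod_2_eq_one even_iff_mod_2_eq_zero)

lemma bit_div_pow: "bit ((a::nat) div 2 ^ m) k = bit a (m + k)"
  by (metis bit_drop_bit_eq comp_apply drop_bit_eq_div)

lemma bit_high:
  assumes a: "(a::nat) < 2 ^ M" and j: "M \<le> j" shows "\<not> bit a j"
proof -
  have "(2::nat) ^ M \<le> 2 ^ j" using j by (simp add: power_increasing)
  hence "a < 2 ^ j" using a by linarith
  hence "a div 2 ^ j = 0" by (simp add: div_less)
  thus ?thesis by (simp add: bit_iff_odd)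
qed

lemma ord_bits:
  fixes a b :: nat
  assumes "\<forall>j>i. bit a j = bit b j" "\<not> bit a i" "bit b i"
  shows "a < b"
proof -
  have q: "a div 2 ^ Suc i = b div 2 ^ Suc i"
  proof (rule bit_eqI)
    fix n
    have "bit (a div 2 ^ Suc i) n = bit a (Suc i + n)" by (rule bit_div_pow)
    moreover have "bit (b div 2 ^ Suc i) n = bit b (Suc i + n)" by (rule bit_div_pow)
    ultimately show "bit (a div 2 ^ Suc i) n = bit (b div 2 ^ Suc i) n" using assms(1) by simp
  qed
  have ma: "a mod 2 ^ Suc i = 2 ^ i * (a div 2 ^ i mod 2) + a mod 2 ^ i"
    by (metis mod_mult2_eq power_Suc2)
  have mb: "b mod 2 ^ Suc i = 2 ^ i * (b div 2 ^ i mod 2) + b mod 2 ^ i"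
    by (metis mod_mult2_eq power_Suc2)
  have "a div 2 ^ i mod 2 = 0" using assms(2) by (simp add: bit_iff_odd even_iff_mod_2_eq_zero)
  moreover have "b div 2 ^ i mod 2 = 1" using assms(3) by (simp add: bit_iff_odd odd_iff_mod_2_eq_one)
  moreover have "a mod 2 ^ i < 2 ^ i" by simp
  ultimately have "a mod 2 ^ Suc i < b mod 2 ^ Suc i" using ma mb
    by (metis add.commute add_0 mult_0_right mult_1_right trans_less_add2)
  moreover have "a = 2 ^ Suc i * (a div 2 ^ Suc i) + a mod 2 ^ Suc i" by simp
  moreover have "b = 2 ^ Suc i * (b div 2 ^ Suc i) + b mod 2 ^ Suc i" by simp
  ultimately show ?thesis using q by (metis add_less_cancel_left)
qed

definition dset :: "nat \<Rightarrow> nat \<Rightarrow> nat \<Rightarrow> nat set" where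
  "dset M a b = {i. i < M \<and> bitd a i \<noteq> bitd b i}"

lemma delta_props:
  fixes a b :: nat
  assumes "a < 2 ^ M" "b < 2 ^ M" "a \<noteq> b"
  shows "delta M a b < M" "bit a (delta M a b) \<noteq> bit b (delta M a b)"
        "\<forall>j>delta M a b. bit a j = bit b j"
proof -
  obtain k where k: "bit a k \<noteq> bit b k" using assms(3) bit_eqI by blast
  have kM: "k < M" using k bit_high assms(1,2) by (meson not_le)
  let ?D = "{i. i < M \<and> bitd a i \<noteq> bitd b i}"
  have fin: "finite ?D" by simp
  have ne: "k \<in> ?D" using k kM by (auto simp: bitd_eq)
  have dm: "delta M a b \<in> ?D" unfolding delta_def using fin ne Max_in by blast
  show "delta M a b < M" using dm by simp
  show "bit a (delta M a b) \<noteq> bit b (delta M a b)" using dm by (auto simp: bitd_eq split: if_splits)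
  show "\<forall>j>delta M a b. bit a j = bit b j"
  proof (intro allI impI)
    fix j assume j: "delta M a b < j"
    show "bit a j = bit b j"
    proof (rule ccontr)
      assume "bit a j \<noteq> bit b j"
      hence "j < M" using bit_high assms(1,2) by (meson not_le)
      hence "j \<in> ?D" using \<open>bit a j \<noteq> bit b j\<close> by (auto simp: bitd_eq)
      hence "j \<le> delta M a b" unfolding delta_def using fin by simp
      thus False using j by simp
    qed
  qed
qed

lemma delta_eqI:
  fixes a b :: nat
  assumes "a < 2 ^ M" "b < 2 ^ M" "bit a i \<noteq> bit b i" "\<forall>j>i. bit a j = bit b j"
  shows "delta M a b = i"
proof -
  have iM: "i < M" using assms bit_high by (meson not_le)
  let ?D = "{i. i < M \<and> bitd a i \<noteq> bitd b i}"
  show ?thesis unfolding delta_def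
  proof (rule Max_eqI)
    show "finite ?D" by simp
    show "i \<in> ?D" using iM assms(3) by (auto simp: bitd_eq)
    fix y assume "y \<in> ?D"
    hence "bit a y \<noteq> bit b y" by (auto simp: bitd_eq split: if_splits)
    thus "y \<le> i" using assms(4) by (meson not_le)
  qed
qed

lemma delta_sym: "delta M a b = delta M b a"
  unfolding delta_def by (metis (no_types, lifting))

lemma delta_ord:
  fixes a b :: nat
  assumes "a < 2 ^ M" "b < 2 ^ M" "a \<noteq> b"
  shows "a < b \<longleftrightarrow> \<not> bit a (delta M a b)"
proof -
  note p = delta_props[OF assms]
  show ?thesis
  proof
    assume "a < b"
    show "\<not> bit a (delta M a b)"
    proof
      assume "bit a (delta M a b)"
      hence "\<not> bit b (delta M a b)" using p(2) by simp
      hence "b < a" using ord_bits[of "delta M a b" b a] p(3) \<open>bit a (delta M a b)\<close> by auto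
      thus False using \<open>a < b\<close> by simp
    qed
  next
    assume "\<not> bit a (delta M a b)"
    hence "bit b (delta M a b)" using p(2) by simp
    thus "a < b" using ord_bits[of "delta M a b" a b] p(3) \<open>\<not> bit a (delta M a b)\<close> by auto
  qed
qed


fun hasAlt :: "nat \<Rightarrow> bool \<Rightarrow> bool list \<Rightarrow> bool" where
  "hasAlt 0 b xs = True"
| "hasAlt (Suc r) b [] = False"
| "hasAlt (Suc r) b (x # xs) = (if x = b then hasAlt r (\<not> b) xs else hasAlt (Suc r) b xs)"

fun RB :: "nat \<Rightarrow> nat \<Rightarrow> bool list \<Rightarrow> bool" where
  "RB 0 l xs = (xs = [])"
| "RB (Suc r) l xs = (\<exists>k b ys. k \<le> l \<and> RB r l ys \<and> xs = replicate k b @ ys)"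

lemma RB_Nil: "RB r l []"
proof (induction r)
  case 0 then show ?case by simp
next
  case (Suc r) then show ?case by (intro RB.simps(2)[THEN iffD2]) (rule exI[of _ 0], auto)
qed

lemma hasAlt_rep: "hasAlt r b (replicate k (\<not> b) @ ys) = hasAlt r b ys"
proof (induction k)
  case 0 then show ?case by simp
next
  case (Suc k) then show ?case by (cases r) auto
qed

lemma RB_of:
  "(\<forall>c. length (filter ((=) c) xs) \<le> l) \<Longrightarrow> (xs = [] \<or> \<not> hasAlt (Suc r) (hd xs) xs) \<Longrightarrow> RB r l xs"
proof (induction r arbitrary: xs)
  case 0
  then show ?case by (cases xs) auto
next
  case (Suc r)
  show ?case
  proof (cases xs)
    case Nil then show ?thesis by (simp add: RB_Nil)
  next
    case (Cons x xs')
    define k where "k = length (takeWhile ((=) x) xs)"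
    define ys where "ys = dropWhile ((=) x) xs"
    have tw: "takeWhile ((=) x) xs = replicate k x"
      unfolding k_def by (metis (full_types) replicate_length_same set_takeWhileD)
    have xs_eq: "xs = replicate k x @ ys" using tw unfolding ys_def by (metis takeWhile_dropWhile_id)
    have k1: "k \<ge> 1" unfolding k_def using Cons by simp
    have "k = length (filter ((=) x) (replicate k x))" by simp
    also have "\<dots> \<le> length (filter ((=) x) (replicate k x @ ys))" by simp
  also have "\<dots> = length (filter ((=) x) xs)" using xs_eq by simp
    finally have kl: "k \<le> l" using Suc.prems(1) by (meson order_trans)
    have ycnt: "\<forall>c. length (filter ((=) c) ys) \<le> l"
    proof
      fix c
      have "length (filter ((=) c) ys) \<le> length (filter ((=) c) (replicate k x @ ys))" by simp
      hence "length (filter ((=) c) ys) \<le> length (filter ((=) c) xs)" using xs_eq by simp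
      thus "length (filter ((=) c) ys) \<le> l" using Suc.prems(1) by (meson order_trans)
    qed
    obtain k' where k': "k = Suc k'" using k1 by (cases k) auto
    have "hasAlt (Suc (Suc r)) x xs = hasAlt (Suc r) (\<not> x) ys"
      using xs_eq k' hasAlt_rep[of "Suc r" "\<not> x" k' ys] by simp
    hence na: "\<not> hasAlt (Suc r) (\<not> x) ys" using Suc.prems(2) Cons by simp
    have "ys = [] \<or> hd ys = (\<not> x)"
      using hd_dropWhile[of "(=) x" xs] unfolding ys_def by auto
    hence "ys = [] \<or> \<not> hasAlt (Suc r) (hd ys) ys" using na by auto
    hence "RB r l ys" using Suc.IH ycnt by blast
    thus ?thesis using kl xs_eq by auto
  qed
qed

lemma RB_card: "finite {xs. RB r l xs} \<and> card {xs. RB r l xs} \<le> (2 * (l + 1)) ^ r"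
proof (induction r)
  case 0 then show ?case by simp
next
  case (Suc r)
  let ?f = "\<lambda>(k, b, ys). replicate k b @ ys"
  have eq: "{xs. RB (Suc r) l xs} = ?f ` ({..l} \<times> (UNIV :: bool set) \<times> {xs. RB r l xs})"
    by (auto simp: image_iff) blast
  have fin: "finite ({..l} \<times> (UNIV :: bool set) \<times> {xs. RB r l xs})" using Suc by simp
  have "card {xs. RB (Suc r) l xs} \<le> card ({..l} \<times> (UNIV :: bool set) \<times> {xs. RB r l xs})"
    unfolding eq by (rule card_image_le[OF fin])
  also have "\<dots> = (l + 1) * 2 * card {xs. RB r l xs}" by (simp add: card_cartesian_product)
  also have "\<dots> \<le> (l + 1) * 2 * (2 * (l + 1)) ^ r" using Suc by (intro mult_le_mono2) simp
  also have "\<dots> = (2 * (l + 1)) ^ Suc r" by simp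
  finally show ?case using eq fin by simp
qed

lemma extract_alt:
  "hasAlt r b (map f zs) \<Longrightarrow> sorted_wrt (<) (zs :: nat list) \<Longrightarrow>
   \<exists>g. (\<forall>j<r. g j \<in> set zs \<and> f (g j) = (if even j then b else \<not> b)) \<and> (\<forall>j. Suc j < r \<longrightarrow> g j < g (Suc j))"
proof (induction zs arbitrary: r b)
  case Nil
  then show ?case by (cases r) auto
next
  case (Cons a zs)
  show ?case
  proof (cases r)
    case 0 then show ?thesis by auto
  next
    case (Suc r')
    show ?thesis
    proof (cases "f a = b")
      case False
      hence "hasAlt r b (map f zs)" using Cons.prems Suc by simp
      from Cons.IH[OF this] Cons.prems(2) obtain g where
        "(\<forall>j<r. g j \<in> set zs \<and> f (g j) = (if even j then b else \<not> b)) \<and> (\<forall>j. Suc j < r \<longrightarrow> g j < g (Suc j))"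
        by auto
      thus ?thesis by auto
    next
      case True
      hence "hasAlt r' (\<not> b) (map f zs)" using Cons.prems Suc by simp
      from Cons.IH[OF this] Cons.prems(2) obtain g where
        g: "\<forall>j<r'. g j \<in> set zs \<and> f (g j) = (if even j then \<not> b else b)"
           "\<forall>j. Suc j < r' \<longrightarrow> g j < g (Suc j)"
        by (metis (full_types) sorted_wrt.simps(2))
      define h where "h j = (if j = 0 then a else g (j - 1))" for j
      have "\<forall>j<r. h j \<in> set (a # zs) \<and> f (h j) = (if even j then b else \<not> b)"
      proof (intro allI impI)
        fix j assume "j < r"
        show "h j \<in> set (a # zs) \<and> f (h j) = (if even j then b else \<not> b)"
        proof (cases j)
          case 0 then show ?thesis using True h_def by simp
        next
          case (Suc j') then show ?thesis using g(1) \<open>j < r\<close> \<open>r = Suc r'\<close> h_def by auto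
        qed
      qed
      moreover have "\<forall>j. Suc j < r \<longrightarrow> h j < h (Suc j)"
      proof (intro allI impI)
        fix j assume j: "Suc j < r"
        show "h j < h (Suc j)"
        proof (cases j)
          case 0
          have "g 0 \<in> set zs" using g(1) j 0 \<open>r = Suc r'\<close> by auto
          then show ?thesis using 0 Cons.prems(2) h_def by auto
        next
          case (Suc j') then show ?thesis using g(2) j \<open>r = Suc r'\<close> h_def by auto
        qed
      qed
      ultimately show ?thesis by blast
    qed
  qed
qed


definition tri :: "bool \<Rightarrow> bool \<Rightarrow> bool \<Rightarrow> bool \<Rightarrow> bool \<Rightarrow> bool" where
  "tri sy sz A B C = ((sz = sy \<longrightarrow> \<not>(A = B \<and> B \<noteq> C)) \<and> (sz \<and> \<not>sy \<longrightarrow> A = C) \<and> (\<not>sz \<and> sy \<longrightarrow> \<not>(A = C \<and> C = B)))"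

locale setting =
  fixes M n :: nat and phi :: "nat \<Rightarrow> nat \<Rightarrow> bool" and S :: "nat set"
  assumes sym: "\<And>x y. x < M \<Longrightarrow> y < M \<Longrightarrow> x \<noteq> y \<Longrightarrow> phi x y = phi y x"
    and hyp: "\<And>A. A \<subseteq> {0..<M} \<Longrightarrow> card A = n \<Longrightarrow>
               \<exists>x\<in>A. \<exists>y\<in>A. \<exists>z\<in>A. x < y \<and> y < z \<and> phi x y = phi y z \<and> phi y z \<noteq> phi x z"
    and indep: "independent M phi S"
begin

definition anc :: "nat \<Rightarrow> nat set" where
  "anc v = {delta M v w | w. w \<in> S \<and> w \<noteq> v}"

lemma S_lt: "x \<in> S \<Longrightarrow> x < 2 ^ M"
  using indep unfolding independent_def by auto

lemma anc_lt: "v \<in> S \<Longrightarrow> i \<in> anc v \<Longrightarrow> i < M"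
  unfolding anc_def using delta_props(1) S_lt by blast

lemma quad:
  assumes "a \<in> S" "b \<in> S" "c \<in> S" "d \<in> S" "a < b" "b < c" "c < d"
    "delta M a b = d1" "delta M b c = d2" "delta M c d = d3"
  shows "\<not> ((((d1 < d2 \<and> d2 < d3) \<or> (d1 > d2 \<and> d2 > d3)) \<and>
          phi d1 d2 = phi d2 d3 \<and> phi d2 d3 \<noteq> phi d1 d3)
    \<or> (d1 > d2 \<and> d2 < d3 \<and> d1 > d3 \<and> phi d1 d2 \<noteq> phi d2 d3)
    \<or> (d1 > d2 \<and> d2 < d3 \<and> d1 < d3 \<and> phi d1 d2 = phi d1 d3 \<and> phi d1 d3 = phi d2 d3))"
  using indep assms unfolding independent_def is_edge_def Let_def by blast

lemma wit:
  assumes "v \<in> S" "w \<in> S" "w \<noteq> v"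
  shows "bit w (delta M v w) \<noteq> bit v (delta M v w)" "\<forall>j>delta M v w. bit w j = bit v j"
  using delta_props[of v M w] assms S_lt by auto

lemma triple:
  assumes v: "v \<in> S" and xy: "x < y" and yz: "y < z"
    and ax: "x \<in> anc v" and ay: "y \<in> anc v" and az: "z \<in> anc v"
  shows "tri (bit v y) (bit v z) (phi x y) (phi y z) (phi x z)"
proof -
  obtain wx where wx: "wx \<in> S" "wx \<noteq> v" "delta M v wx = x" using ax unfolding anc_def by blast
  obtain wy where wy: "wy \<in> S" "wy \<noteq> v" "delta M v wy = y" using ay unfolding anc_def by blast
  obtain wz where wz: "wz \<in> S" "wz \<noteq> v" "delta M v wz = z" using az unfolding anc_def by blast
  have xM: "x < M" and yM: "y < M" and zM: "z < M" using anc_lt v ax ay az by auto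
  note bx = wit[OF v wx(1,2), unfolded wx(3)]
  note by' = wit[OF v wy(1,2), unfolded wy(3)]
  note bz = wit[OF v wz(1,2), unfolded wz(3)]
  have lt: "v < 2^M" "wx < 2^M" "wy < 2^M" "wz < 2^M" using S_lt v wx wy wz by auto
  have dxy: "delta M wx wy = y"
    by (rule delta_eqI) (use lt bx by' xy in auto)
  have dxz: "delta M wx wz = z"
    by (rule delta_eqI) (use lt bx bz xy yz in auto)
  have dyz: "delta M wy wz = z"
    by (rule delta_eqI) (use lt by' bz xy yz in auto)
  have dvx: "delta M v wx = x" "delta M v wy = y" "delta M v wz = z" using wx wy wz by auto
  have ne1: "wx \<noteq> wy" using bx(2) by'(1) xy by auto
  have ne2: "wx \<noteq> wz" using bx(2) bz(1) xy yz by auto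
  have ne3: "wy \<noteq> wz" using by'(2) bz(1) yz by auto
  note ne = ne1 ne2 ne3
  have ovx: "v < wx \<longleftrightarrow> \<not> bit v x" using delta_ord[of v M wx] lt wx dvx by auto
  have ovy: "v < wy \<longleftrightarrow> \<not> bit v y" using delta_ord[of v M wy] lt wy dvx by auto
  have ovz: "v < wz \<longleftrightarrow> \<not> bit v z" using delta_ord[of v M wz] lt wz dvx by auto
  have oxy: "wx < wy \<longleftrightarrow> \<not> bit v y" using delta_ord[of wx M wy] lt ne dxy bx xy by auto
  have oxz: "wx < wz \<longleftrightarrow> \<not> bit v z" using delta_ord[of wx M wz] lt ne dxz bx xy yz by auto
  have oyz: "wy < wz \<longleftrightarrow> \<not> bit v z" using delta_ord[of wy M wz] lt ne dyz by' yz by auto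
  define lo where "lo = min v wx"
  define hi where "hi = max v wx"
  have lohi: "lo < hi" "lo \<in> S" "hi \<in> S" "delta M lo hi = x"
    using wx v delta_sym[of M v wx] unfolding lo_def hi_def by (auto simp: min_def max_def)
  have loy: "delta M lo wy = y" "delta M hi wy = y" "delta M wy lo = y" "delta M wy hi = y"
    using dxy dvx delta_sym[of M wy v] delta_sym[of M wy wx] unfolding lo_def hi_def by (auto simp: min_def max_def)
  have loz: "delta M lo wz = z" "delta M hi wz = z" "delta M wz lo = z" "delta M wz hi = z"
    using dxz dvx delta_sym[of M wz v] delta_sym[of M wz wx] unfolding lo_def hi_def by (auto simp: min_def max_def)
  have dzy: "delta M wz wy = y \<or> True" by simp
  have dyz': "delta M wz wy = z" using dyz delta_sym by metis
  have oly: "lo < wy \<longleftrightarrow> \<not> bit v y" "hi < wy \<longleftrightarrow> \<not> bit v y"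
    using ovy oxy unfolding lo_def hi_def by (auto simp: min_def max_def)
  have olz: "lo < wz \<longleftrightarrow> \<not> bit v z" "hi < wz \<longleftrightarrow> \<not> bit v z"
    using ovz oxz unfolding lo_def hi_def by (auto simp: min_def max_def)
  have dd: "wy \<noteq> lo" "wz \<noteq> lo" "wy \<noteq> hi" "wz \<noteq> hi"
    using ne wy(2) wz(2) unfolding lo_def hi_def by (auto simp: min_def max_def)
  have s: "phi y x = phi x y" "phi z y = phi y z" "phi z x = phi x z"
    using sym xM yM zM xy yz by auto
  consider "\<not> bit v z" "\<not> bit v y" | "bit v z" "bit v y" | "bit v z" "\<not> bit v y" | "\<not> bit v z" "bit v y"
    by blast
  then show ?thesis
  proof cases
    case 1
    have "wy < wz" "hi < wy" using 1 oyz oly by auto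
    from quad[OF lohi(2,3) wy(1) wz(1) lohi(1) this(2,1) lohi(4) loy(2) dyz]
    show ?thesis using 1 xy yz s unfolding tri_def by auto
  next
    case 2
    have "wz < wy" "wy < lo" using 2 oyz oly ne3 dd by auto
    from quad[OF wz(1) wy(1) lohi(2,3) this lohi(1) dyz' loy(3) lohi(4)]
    show ?thesis using 2 xy yz s unfolding tri_def by auto
  next
    case 3
    have "wz < lo" "hi < wy" using 3 olz oly dd by auto
    from quad[OF wz(1) lohi(2,3) wy(1) this(1) lohi(1) this(2) loz(3) lohi(4) loy(2)]
    show ?thesis using 3 xy yz s unfolding tri_def by auto
  next
    case 4
    have "wy < lo" "hi < wz" using 4 oly olz dd by auto
    from quad[OF wy(1) lohi(2,3) wz(1) this(1) lohi(1) this(2) loy(3) lohi(4) loz(2)]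
    show ?thesis using 4 xy yz s unfolding tri_def by auto
  qed
qed

end

lemma (in setting) seven:
  assumes v: "v \<in> S" and a: "a0 \<in> anc v" "a1 \<in> anc v" "a2 \<in> anc v" "a3 \<in> anc v" "a4 \<in> anc v" "a5 \<in> anc v" "a6 \<in> anc v"
    and o: "a0 < a1" "a1 < a2" "a2 < a3" "a3 < a4" "a4 < a5" "a5 < a6"
    and alt: "bit v a2 \<noteq> bit v a1" "bit v a3 \<noteq> bit v a2" "bit v a4 \<noteq> bit v a3" "bit v a5 \<noteq> bit v a4" "bit v a6 \<noteq> bit v a5"
  shows False
proof -
  have t012: "tri (bit v a1) (bit v a2) (phi a0 a1) (phi a1 a2) (phi a0 a2)"
    by (rule triple[OF v _ _ a(1) a(2) a(3)]) (use o in linarith)+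
  have t013: "tri (bit v a1) (bit v a3) (phi a0 a1) (phi a1 a3) (phi a0 a3)"
    by (rule triple[OF v _ _ a(1) a(2) a(4)]) (use o in linarith)+
  have t014: "tri (bit v a1) (bit v a4) (phi a0 a1) (phi a1 a4) (phi a0 a4)"
    by (rule triple[OF v _ _ a(1) a(2) a(5)]) (use o in linarith)+
  have t015: "tri (bit v a1) (bit v a5) (phi a0 a1) (phi a1 a5) (phi a0 a5)"
    by (rule triple[OF v _ _ a(1) a(2) a(6)]) (use o in linarith)+
  have t016: "tri (bit v a1) (bit v a6) (phi a0 a1) (phi a1 a6) (phi a0 a6)"
    by (rule triple[OF v _ _ a(1) a(2) a(7)]) (use o in linarith)+
  have t023: "tri (bit v a2) (bit v a3) (phi a0 a2) (phi a2 a3) (phi a0 a3)"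
    by (rule triple[OF v _ _ a(1) a(3) a(4)]) (use o in linarith)+
  have t024: "tri (bit v a2) (bit v a4) (phi a0 a2) (phi a2 a4) (phi a0 a4)"
    by (rule triple[OF v _ _ a(1) a(3) a(5)]) (use o in linarith)+
  have t025: "tri (bit v a2) (bit v a5) (phi a0 a2) (phi a2 a5) (phi a0 a5)"
    by (rule triple[OF v _ _ a(1) a(3) a(6)]) (use o in linarith)+
  have t026: "tri (bit v a2) (bit v a6) (phi a0 a2) (phi a2 a6) (phi a0 a6)"
    by (rule triple[OF v _ _ a(1) a(3) a(7)]) (use o in linarith)+
  have t034: "tri (bit v a3) (bit v a4) (phi a0 a3) (phi a3 a4) (phi a0 a4)"
    by (rule triple[OF v _ _ a(1) a(4) a(5)]) (use o in linarith)+
  have t035: "tri (bit v a3) (bit v a5) (phi a0 a3) (phi a3 a5) (phi a0 a5)"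
    by (rule triple[OF v _ _ a(1) a(4) a(6)]) (use o in linarith)+
  have t036: "tri (bit v a3) (bit v a6) (phi a0 a3) (phi a3 a6) (phi a0 a6)"
    by (rule triple[OF v _ _ a(1) a(4) a(7)]) (use o in linarith)+
  have t045: "tri (bit v a4) (bit v a5) (phi a0 a4) (phi a4 a5) (phi a0 a5)"
    by (rule triple[OF v _ _ a(1) a(5) a(6)]) (use o in linarith)+
  have t046: "tri (bit v a4) (bit v a6) (phi a0 a4) (phi a4 a6) (phi a0 a6)"
    by (rule triple[OF v _ _ a(1) a(5) a(7)]) (use o in linarith)+
  have t056: "tri (bit v a5) (bit v a6) (phi a0 a5) (phi a5 a6) (phi a0 a6)"
    by (rule triple[OF v _ _ a(1) a(6) a(7)]) (use o in linarith)+
  have t123: "tri (bit v a2) (bit v a3) (phi a1 a2) (phi a2 a3) (phi a1 a3)"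
    by (rule triple[OF v _ _ a(2) a(3) a(4)]) (use o in linarith)+
  have t124: "tri (bit v a2) (bit v a4) (phi a1 a2) (phi a2 a4) (phi a1 a4)"
    by (rule triple[OF v _ _ a(2) a(3) a(5)]) (use o in linarith)+
  have t125: "tri (bit v a2) (bit v a5) (phi a1 a2) (phi a2 a5) (phi a1 a5)"
    by (rule triple[OF v _ _ a(2) a(3) a(6)]) (use o in linarith)+
  have t126: "tri (bit v a2) (bit v a6) (phi a1 a2) (phi a2 a6) (phi a1 a6)"
    by (rule triple[OF v _ _ a(2) a(3) a(7)]) (use o in linarith)+
  have t134: "tri (bit v a3) (bit v a4) (phi a1 a3) (phi a3 a4) (phi a1 a4)"
    by (rule triple[OF v _ _ a(2) a(4) a(5)]) (use o in linarith)+
  have t135: "tri (bit v a3) (bit v a5) (phi a1 a3) (phi a3 a5) (phi a1 a5)"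
    by (rule triple[OF v _ _ a(2) a(4) a(6)]) (use o in linarith)+
  have t136: "tri (bit v a3) (bit v a6) (phi a1 a3) (phi a3 a6) (phi a1 a6)"
    by (rule triple[OF v _ _ a(2) a(4) a(7)]) (use o in linarith)+
  have t145: "tri (bit v a4) (bit v a5) (phi a1 a4) (phi a4 a5) (phi a1 a5)"
    by (rule triple[OF v _ _ a(2) a(5) a(6)]) (use o in linarith)+
  have t146: "tri (bit v a4) (bit v a6) (phi a1 a4) (phi a4 a6) (phi a1 a6)"
    by (rule triple[OF v _ _ a(2) a(5) a(7)]) (use o in linarith)+
  have t156: "tri (bit v a5) (bit v a6) (phi a1 a5) (phi a5 a6) (phi a1 a6)"
    by (rule triple[OF v _ _ a(2) a(6) a(7)]) (use o in linarith)+
  have t234: "tri (bit v a3) (bit v a4) (phi a2 a3) (phi a3 a4) (phi a2 a4)"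
    by (rule triple[OF v _ _ a(3) a(4) a(5)]) (use o in linarith)+
  have t235: "tri (bit v a3) (bit v a5) (phi a2 a3) (phi a3 a5) (phi a2 a5)"
    by (rule triple[OF v _ _ a(3) a(4) a(6)]) (use o in linarith)+
  have t236: "tri (bit v a3) (bit v a6) (phi a2 a3) (phi a3 a6) (phi a2 a6)"
    by (rule triple[OF v _ _ a(3) a(4) a(7)]) (use o in linarith)+
  have t245: "tri (bit v a4) (bit v a5) (phi a2 a4) (phi a4 a5) (phi a2 a5)"
    by (rule triple[OF v _ _ a(3) a(5) a(6)]) (use o in linarith)+
  have t246: "tri (bit v a4) (bit v a6) (phi a2 a4) (phi a4 a6) (phi a2 a6)"
    by (rule triple[OF v _ _ a(3) a(5) a(7)]) (use o in linarith)+
  have t256: "tri (bit v a5) (bit v a6) (phi a2 a5) (phi a5 a6) (phi a2 a6)"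
    by (rule triple[OF v _ _ a(3) a(6) a(7)]) (use o in linarith)+
  have t345: "tri (bit v a4) (bit v a5) (phi a3 a4) (phi a4 a5) (phi a3 a5)"
    by (rule triple[OF v _ _ a(4) a(5) a(6)]) (use o in linarith)+
  have t346: "tri (bit v a4) (bit v a6) (phi a3 a4) (phi a4 a6) (phi a3 a6)"
    by (rule triple[OF v _ _ a(4) a(5) a(7)]) (use o in linarith)+
  have t356: "tri (bit v a5) (bit v a6) (phi a3 a5) (phi a5 a6) (phi a3 a6)"
    by (rule triple[OF v _ _ a(4) a(6) a(7)]) (use o in linarith)+
  have t456: "tri (bit v a5) (bit v a6) (phi a4 a5) (phi a5 a6) (phi a4 a6)"
    by (rule triple[OF v _ _ a(5) a(6) a(7)]) (use o in linarith)+
  show False using alt t012 t013 t014 t015 t016 t023 t024 t025 t026 t034 t035 t036 t045 t046 t056 t123 t124 t125 t126 t134 t135 t136 t145 t146 t156 t234 t235 t236 t245 t246 t256 t345 t346 t356 t456 unfolding tri_def by (cases "bit v a6"; cases "bit v a0"; smt)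
qed


lemma sl_split:
  fixes A :: "nat set"
  assumes "finite A" "d \<in> A"
  shows "sorted_list_of_set A = sorted_list_of_set {i\<in>A. i < d} @ d # sorted_list_of_set {i\<in>A. d < i}"
proof (rule sorted_distinct_set_unique)
  show "sorted (sorted_list_of_set A)" "distinct (sorted_list_of_set A)" by auto
  have f1: "finite {i\<in>A. i < d}" "finite {i\<in>A. d < i}" using assms by auto
  show "sorted (sorted_list_of_set {i\<in>A. i < d} @ d # sorted_list_of_set {i\<in>A. d < i})"
    using f1 by (auto simp: sorted_append less_imp_le)
  show "distinct (sorted_list_of_set {i\<in>A. i < d} @ d # sorted_list_of_set {i\<in>A. d < i})"
    using f1 by auto
  show "set (sorted_list_of_set A) = set (sorted_list_of_set {i\<in>A. i < d} @ d # sorted_list_of_set {i\<in>A. d < i})"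
    using f1 assms by auto
qed

context setting
begin

definition addr :: "nat \<Rightarrow> bool list" where
  "addr v = map (bit v) (sorted_list_of_set (anc v))"

lemma finite_S: "finite S"
proof -
  have "S \<subseteq> {0..<2^M}" using S_lt by auto
  thus ?thesis using finite_subset by blast
qed

lemma fin_anc: "finite (anc v)"
proof -
  have "anc v = (delta M v) ` (S - {v})" unfolding anc_def by auto
  thus ?thesis using finite_S by simp
qed

lemma count_bound:
  assumes v: "v \<in> S" and ne: "anc v \<noteq> {}" and n1: "1 \<le> n"
  shows "card {a \<in> anc v - {Min (anc v)}. bit v a = c} \<le> n - 2"
proof (rule ccontr)
  let ?m = "Min (anc v)"
  let ?X = "{a \<in> anc v - {?m}. bit v a = c}"
  assume "\<not> card ?X \<le> n - 2"
  hence "n - 1 \<le> card ?X" by simp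
  then obtain C where C: "C \<subseteq> ?X" "card C = n - 1" "finite C"
    by (rule obtain_subset_with_card_n)
  have finC: "finite C" by (rule C(3))
  have mA: "?m \<in> anc v" using fin_anc ne Min_in by blast
  have mC: "?m \<notin> C" using C(1) by auto
  define B where "B = insert ?m C"
  have cB: "card B = n" unfolding B_def using finC mC C(2) n1 by simp
  have BA: "B \<subseteq> anc v" unfolding B_def using C(1) mA by auto
  have BM: "B \<subseteq> {0..<M}" using BA anc_lt v by auto
  obtain x y z where xyz: "x \<in> B" "y \<in> B" "z \<in> B" "x < y" "y < z" "phi x y = phi y z" "phi y z \<noteq> phi x z"
    using hyp[OF BM cB] by blast
  have "?m \<le> x" using xyz(1) BA fin_anc[of v] by (meson Min_le subsetD)
  hence "y \<noteq> ?m" "z \<noteq> ?m" using xyz by auto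
  hence "y \<in> C" "z \<in> C" using xyz(2,3) unfolding B_def by auto
  hence "bit v y = c" "bit v z = c" using C(1) by auto
  moreover have "tri (bit v y) (bit v z) (phi x y) (phi y z) (phi x z)"
    using triple[OF v xyz(4,5)] xyz(1,2,3) BA by auto
  ultimately show False using xyz(6,7) unfolding tri_def by auto
qed

lemma tl_RB:
  assumes v: "v \<in> S" and ne: "anc v \<noteq> {}" and n1: "1 \<le> n"
  shows "RB 5 (n - 2) (tl (addr v))"
proof -
  let ?m = "Min (anc v)"
  let ?A' = "anc v - {?m}"
  let ?L = "sorted_list_of_set ?A'"
  have tl_eq: "tl (addr v) = map (bit v) ?L"
    unfolding addr_def using sorted_list_of_set_nonempty[OF fin_anc ne] by simp
  have finA': "finite ?A'" using fin_anc by simp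
  have cnt: "\<forall>c. length (filter ((=) c) (map (bit v) ?L)) \<le> n - 2"
  proof
    fix c
    have "length (filter ((=) c) (map (bit v) ?L)) = length (filter (\<lambda>a. c = bit v a) ?L)"
      by (simp add: filter_map comp_def)
    also have "\<dots> = card (set (filter (\<lambda>a. c = bit v a) ?L))"
      by (rule distinct_card[symmetric]) simp
    also have "set (filter (\<lambda>a. c = bit v a) ?L) = {a \<in> ?A'. bit v a = c}"
      using finA' by auto
    finally show "length (filter ((=) c) (map (bit v) ?L)) \<le> n - 2"
      using count_bound[OF v ne n1, of c] by simp
  qed
  have noalt: "\<not> hasAlt 6 b (map (bit v) ?L)" for b
  proof
    assume "hasAlt 6 b (map (bit v) ?L)"
    from extract_alt[OF this] obtain g where
      g: "\<forall>j<6. g j \<in> set ?L \<and> bit v (g j) = (if even j then b else \<not> b)"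
         "\<forall>j. Suc j < 6 \<longrightarrow> g j < g (Suc j)"
      by (metis sorted_list_of_set.strict_sorted_key_list_of_set)
    have gA: "g j \<in> anc v" "?m < g j" if "j < 6" for j
    proof -
      have "g j \<in> ?A'" using g(1) that finA' by auto
      thus "g j \<in> anc v" by simp
      have "?m \<le> g j" using \<open>g j \<in> ?A'\<close> fin_anc by simp
      thus "?m < g j" using \<open>g j \<in> ?A'\<close> by auto
    qed
    have mA: "?m \<in> anc v" using fin_anc ne Min_in by blast
    have gb: "bit v (g 0) = b" "bit v (g 1) = (\<not> b)" "bit v (g 2) = b" "bit v (g 3) = (\<not> b)"
      "bit v (g 4) = b" "bit v (g 5) = (\<not> b)" using g(1) by auto
    have go: "g 0 < g 1" "g 1 < g 2" "g 2 < g 3" "g 3 < g 4" "g 4 < g 5"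
      using g(2)[rule_format, of 0] g(2)[rule_format, of 1] g(2)[rule_format, of 2]
        g(2)[rule_format, of 3] g(2)[rule_format, of 4] by (simp_all add: eval_nat_numeral)
    show False
      by (rule seven[OF v mA gA(1)[of 0] gA(1)[of 1] gA(1)[of 2] gA(1)[of 3] gA(1)[of 4] gA(1)[of 5]])
         (use gA(2)[of 0] go gb in \<open>auto simp: eval_nat_numeral\<close>)
  qed
  have "RB 5 (n - 2) (map (bit v) ?L)"
    by (rule RB_of) (use cnt noalt in \<open>auto simp: numeral_eq_Suc\<close>)
  thus ?thesis using tl_eq by simp
qed

lemma addr_inj:
  assumes v: "v \<in> S" and w: "w \<in> S" and vw: "v \<noteq> w"
  shows "addr v \<noteq> addr w"
proof
  assume eq: "addr v = addr w"
  define d where "d = delta M v w"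
  have lt: "v < 2^M" "w < 2^M" using S_lt v w by auto
  note dp = delta_props[OF lt vw, folded d_def]
  have dA: "d \<in> anc v" unfolding anc_def d_def using w vw by auto
  have dB: "d \<in> anc w" unfolding anc_def d_def using v vw delta_sym[of M v w] by auto
  have trans: "i \<in> anc a" if a: "a \<in> S" "b \<in> S" "i \<in> anc b" "d < i" "\<forall>j>d. bit a j = bit b j" for a b i
  proof -
    obtain u where u: "u \<in> S" "u \<noteq> b" "delta M b u = i" using a(3) unfolding anc_def by auto
    have lt2: "a < 2^M" "b < 2^M" "u < 2^M" using S_lt a u by auto
    note up = delta_props[OF lt2(2) lt2(3) u(2)[symmetric], unfolded u(3)]
    have "delta M a u = i"
      by (rule delta_eqI) (use lt2 up a(4,5) in auto)
    moreover have "u \<noteq> a" using up(2) a(4,5) by auto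
    ultimately show ?thesis unfolding anc_def using u(1) by blast
  qed
  have ag1: "\<forall>j>d. bit v j = bit w j" using dp(3) by blast
  have ag2: "\<forall>j>d. bit w j = bit v j" using dp(3) by simp
  have up_eq: "{i \<in> anc v. d < i} = {i \<in> anc w. d < i}"
  proof (rule set_eqI)
    fix i
    show "i \<in> {i \<in> anc v. d < i} \<longleftrightarrow> i \<in> {i \<in> anc w. d < i}"
      using trans[OF v w _ _ ag1, of i] trans[OF w v _ _ ag2, of i] by blast
  qed
  have finU: "finite {i \<in> anc w. d < i}" using fin_anc[of w] by simp
  have bits_eq: "map (bit v) (sorted_list_of_set {i \<in> anc w. d < i}) = map (bit w) (sorted_list_of_set {i \<in> anc w. d < i})"
  proof (rule map_cong[OF refl])
    fix i assume "i \<in> set (sorted_list_of_set {i \<in> anc w. d < i})"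
    hence "d < i" using finU by simp
    thus "bit v i = bit w i" using ag1 by blast
  qed
  define U where "U = map (bit w) (sorted_list_of_set {i \<in> anc w. d < i})"
  define X where "X = map (bit v) (sorted_list_of_set {i \<in> anc v. i < d})"
  define Y where "Y = map (bit w) (sorted_list_of_set {i \<in> anc w. i < d})"
  have av: "addr v = (X @ [bit v d]) @ U"
    unfolding addr_def X_def U_def using sl_split[OF fin_anc dA] up_eq bits_eq by simp
  have aw: "addr w = (Y @ [bit w d]) @ U"
    unfolding addr_def Y_def U_def using sl_split[OF fin_anc dB] by simp
  have "X @ [bit v d] = Y @ [bit w d]" using eq av aw append_same_eq by metis
  hence "bit v d = bit w d" by simp
  thus False using dp(2) by simp
qed

lemma card_bound:
  assumes n2: "2 \<le> n" and S2: "2 \<le> card S"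
  shows "card S \<le> 64 * (n - 1) ^ 5"
proof -
  have ne: "anc v \<noteq> {}" if "v \<in> S" for v
  proof -
    have "card (S - {v}) \<ge> 1" using S2 that finite_S by (simp add: card_Diff_singleton)
    hence "S - {v} \<noteq> {}" by (metis card.empty not_one_le_zero)
    then obtain w where "w \<in> S" "w \<noteq> v" by auto
    thus ?thesis unfolding anc_def by auto
  qed
  let ?W = "{xs. RB 5 (n - 2) xs}"
  have sub: "addr ` S \<subseteq> (\<lambda>(b, ys). b # ys) ` (UNIV \<times> ?W)"
  proof
    fix a assume "a \<in> addr ` S"
    then obtain v where v: "v \<in> S" "a = addr v" by auto
    have "addr v \<noteq> []" unfolding addr_def using ne[OF v(1)] fin_anc by simp
    hence "addr v = hd (addr v) # tl (addr v)" by simp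
    moreover have "tl (addr v) \<in> ?W" using tl_RB[OF v(1) ne[OF v(1)]] n2 by simp
    ultimately show "a \<in> (\<lambda>(b, ys). b # ys) ` (UNIV \<times> ?W)"
      using v(2) by (intro image_eqI[of _ _ "(hd (addr v), tl (addr v))"]) auto
  qed
  have finW: "finite ?W" using RB_card by blast
  have "card S = card (addr ` S)"
    by (rule card_image[symmetric]) (use addr_inj in \<open>auto simp: inj_on_def\<close>)
  also have "\<dots> \<le> card ((\<lambda>(b, ys). b # ys) ` (UNIV \<times> ?W))"
    by (rule card_mono) (use finW sub in auto)
  also have "\<dots> \<le> card ((UNIV :: bool set) \<times> ?W)"
    by (rule card_image_le) (use finW in simp)
  also have "\<dots> = 2 * card ?W" by (simp add: card_cartesian_product)
  also have "\<dots> \<le> 2 * (2 * (n - 2 + 1)) ^ 5" using RB_card[of 5 "n - 2"] by simp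
  also have "\<dots> = 64 * (n - 1) ^ 5"
  proof -
    have e: "n - 2 + 1 = n - 1" using n2 by simp
    show ?thesis unfolding e power_mult_distrib by simp
  qed
  finally show ?thesis .
qed

end

theorem mainTheorem4:
  fixes n M :: nat and phi :: "nat \<Rightarrow> nat \<Rightarrow> bool"
  assumes "n \<ge> 5" and "M \<ge> 1"
    and sym: "\<And>x y. x < M \<Longrightarrow> y < M \<Longrightarrow> x \<noteq> y \<Longrightarrow> phi x y = phi y x"
    and hyp: "\<And>A. A \<subseteq> {0..<M} \<Longrightarrow> card A = n \<Longrightarrow>
               \<exists>x\<in>A. \<exists>y\<in>A. \<exists>z\<in>A. x < y \<and> y < z \<and> phi x y = phi y z \<and> phi y z \<noteq> phi x z"
  shows "\<not> (\<exists>S. independent M phi S \<and> card S = 2 ^ 6 * n ^ 5 + 1)"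
proof
  assume "\<exists>S. independent M phi S \<and> card S = 2 ^ 6 * n ^ 5 + 1"
  then obtain S where S: "independent M phi S" "card S = 2 ^ 6 * n ^ 5 + 1" by blast
  interpret setting M n phi S using sym hyp S(1) by unfold_locales auto
  have "n ^ 5 \<ge> 1" using assms(1) by simp
  hence "2 \<le> card S" using S(2) by simp
  hence "card S \<le> 64 * (n - 1) ^ 5" using card_bound assms(1) by simp
  moreover have "(n - 1) ^ 5 \<le> n ^ 5" by (rule power_mono) simp_all
  moreover have "card S = 64 * n ^ 5 + 1" using S(2) by simp
  ultimately show False by linarith
qed

end
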